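(* There is an absolute constant $C>0$ such that for every $a\in(-\infty,1)$ and all $\omega_1,\omega_2\in\mathbb D_a$, $$|r(\omega_1)-r(\omega_2)|\le C\,\|\rho(\omega_1-\omega_2)\|_{L^\infty}^{1/2}.$$
   Context: Let $\rho(x)=(1+|x|)^{-1/2}$ and $\eta_a=\frac{1}{2^{9/2}(4+|a|)^3}$. $\mathbb D_a$ is the set of continuous even functions $\omega$ on $\mathbb R$ with $\|\rho\omega\|_{L^\infty}<\infty$ such that $\omega(0)=1$; $(1-x^2)_+\le\omega(x)\le1$ for all $x$; $\omega$ is non-increasing on $[0,\infty)$; $s\mapsto\omega(\sqrt s)$ is convex on $[0,\infty)$; and the left derivative satisfies $\omega'_-(1/2)\le-\eta_a$. $r(\omega)=\frac1\pi\int_0^\infty\frac{\omega(0)-\omega(y)}{y^2}\,dy$. *)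

theory Defs
  imports "HOL-Analysis.Analysis"
begin

definition rho :: "real \<Rightarrow> real" where
  "rho x = (1 + \<bar>x\<bar>) powr (-1/2)"

definition eta :: "real \<Rightarrow> real" where
  "eta a = 1 / (2 powr (9/2) * (4 + \<bar>a\<bar>) ^ 3)"

text \<open>Weighted sup norm: the L-infinity norm of rho * f (f continuous, so sup = ess sup).\<close>
definition wnorm :: "(real \<Rightarrow> real) \<Rightarrow> real" where
  "wnorm f = (SUP x. \<bar>rho x * f x\<bar>)"

definition DD :: "real \<Rightarrow> (real \<Rightarrow> real) set" where
  "DD a = {\<omega>. continuous_on UNIV \<omega>
      \<and> (\<forall>x. \<omega> (-x) = \<omega> x)
      \<and> bdd_above (range (\<lambda>x. \<bar>rho x * \<omega> x\<bar>))
      \<and> \<omega> 0 = 1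
      \<and> (\<forall>x. max (1 - x^2) 0 \<le> \<omega> x \<and> \<omega> x \<le> 1)
      \<and> (\<forall>x y. 0 \<le> x \<longrightarrow> x \<le> y \<longrightarrow> \<omega> y \<le> \<omega> x)
      \<and> convex_on {0..} (\<lambda>s. \<omega> (sqrt s))
      \<and> (\<exists>D. (\<omega> has_real_derivative D) (at (1/2) within {..1/2}) \<and> D \<le> - eta a)}"

definition rr :: "(real \<Rightarrow> real) \<Rightarrow> real" where
  "rr \<omega> = (1 / pi) * (LINT y:{0<..}|lborel. (\<omega> 0 - \<omega> y) / y^2)"

end

theory Submission imports Defs begin

definition gfun :: "real \<Rightarrow> real \<Rightarrow> real \<Rightarrow> real" where
  "gfun s K y = (if y \<le> s then 1 else K * y powr (-3/2))"

lemma gfun_int: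
  assumes s: "s > 0"
  shows "(gfun s K has_integral (s + K * (2 * s powr (-1/2)))) {0<..}"
proof -
  have a1: "((\<lambda>_. 1::real) has_integral s) {0..s}"
    using has_integral_const_real[of "1::real" 0 s] s by simp
  have a2: "((\<lambda>_. 1::real) has_integral s) {0<..s}"
  proof -
    have "{x \<in> {0..s} - {0<..s}. (1::real) \<noteq> 0} \<subseteq> {0}" by auto
    hence n1: "negligible {x \<in> {0..s} - {0<..s}. (1::real) \<noteq> 0}"
      using negligible_subset negligible_sing by metis
    have "{x \<in> {0<..s} - {0..s}. (1::real) \<noteq> 0} = {}" by auto
    hence n2: "negligible {x \<in> {0<..s} - {0..s}. (1::real) \<noteq> 0}" by (metis negligible_empty)
    show ?thesis using a1 has_integral_spike_set_eq[OF n1 n2] by blast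
  qed
  have a3: "(gfun s K has_integral s) {0<..s}"
    using a2 by (rule has_integral_eq[rotated]) (simp add: gfun_def)
  have b1: "((\<lambda>x. x powr (-3/2)) has_integral (2 * s powr (-1/2))) {s..}"
    using has_integral_powr_to_inf[of "-3/2" s] s by (simp add: mult.commute)
  have b2: "((\<lambda>x. x powr (-3/2)) has_integral (2 * s powr (-1/2))) {s<..}"
  proof -
    have "{x \<in> {s..} - {s<..}. x powr (-3/2) \<noteq> (0::real)} \<subseteq> {s}" by auto
    hence n1: "negligible {x \<in> {s..} - {s<..}. x powr (-3/2) \<noteq> (0::real)}"
      using negligible_subset negligible_sing by metis
    have "{x \<in> {s<..} - {s..}. x powr (-3/2) \<noteq> (0::real)} = {}" by auto
    hence n2: "negligible {x \<in> {s<..} - {s..}. x powr (-3/2) \<noteq> (0::real)}" by (metis negligible_empty)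
    show ?thesis using b1 has_integral_spike_set_eq[OF n1 n2] by blast
  qed
  have b3: "(gfun s K has_integral (K * (2 * s powr (-1/2)))) {s<..}"
    using has_integral_mult_right[OF b2, of K] by (rule has_integral_eq[rotated]) (simp add: gfun_def)
  have "(gfun s K has_integral (s + K * (2 * s powr (-1/2)))) ({0<..s} \<union> {s<..})"
    by (rule has_integral_Un[OF a3 b3]) (metis negligible_empty Int_emptyI greaterThanAtMost_iff greaterThan_iff not_less)
  moreover have "{0<..s} \<union> {s<..} = {0<..}" using s by auto
  ultimately show ?thesis by simp
qed


lemma powr_m32: "y > 0 \<Longrightarrow> y powr (-3/2) = 1 / (y * sqrt y)"
proof -
  assume y: "y > 0"
  have "y powr (3/2) = y powr (1 + 1/2)" by simp
  also have "\<dots> = y powr 1 * y powr (1/2)" by (rule powr_add)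
  also have "\<dots> = y * sqrt y" using y by (simp add: powr_half_sqrt)
  finally show ?thesis using y by (simp add: powr_minus_divide)
qed

lemma gfun_alt: "y > 0 \<Longrightarrow> gfun s K y = (if y \<le> s then 1 else K / (y * sqrt y))"
  unfolding gfun_def using powr_m32[of y] by simp

lemma set_int_dom:
  fixes f g :: "real \<Rightarrow> real"
  assumes fm: "f \<in> borel_measurable borel" and gi: "(g has_integral I) {0<..}"
    and b: "\<And>x. x > 0 \<Longrightarrow> \<bar>f x\<bar> \<le> g x"
  shows "set_integrable lborel {0<..} f"
proof -
  have [measurable]: "f \<in> borel_measurable borel" by (rule fm)
  have nn: "integral\<^sup>N lborel (\<lambda>x. ennreal (g x) * indicator {0<..} x) = ennreal I"
    by (rule nn_integral_has_integral_lebesgue'[OF _ gi]) (use b in force)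
  have "(\<integral>\<^sup>+x. ennreal (norm (indicator {0<..} x *\<^sub>R f x)) \<partial>lborel)
        \<le> (\<integral>\<^sup>+x. ennreal (g x) * indicator {0<..} x \<partial>lborel)"
    by (rule nn_integral_mono) (auto simp: indicator_def b intro: ennreal_leI)
  hence "(\<integral>\<^sup>+x. ennreal (norm (indicator {0<..} x *\<^sub>R f x)) \<partial>lborel) < \<infinity>"
    using nn by (simp add: order_le_less_trans)
  then show ?thesis unfolding set_integrable_def
    by (intro integrableI_bounded) measurable
qed

lemma DD_props:
  assumes "\<omega> \<in> DD a"
  shows "continuous_on UNIV \<omega>" "\<omega> 0 = 1" "\<And>x. max (1 - x^2) 0 \<le> \<omega> x" "\<And>x. \<omega> x \<le> 1"
  using assms unfolding DD_def by auto

lemma DD_meas: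
  assumes "\<omega> \<in> DD a"
  shows "(\<lambda>y. (\<omega> 0 - \<omega> y) / y^2) \<in> borel_measurable borel"
proof -
  have [measurable]: "\<omega> \<in> borel_measurable borel"
    using DD_props(1)[OF assms] by (rule borel_measurable_continuous_onI)
  show ?thesis by measurable
qed

lemma DD_dom:
  assumes "\<omega> \<in> DD a" "y > 0"
  shows "\<bar>(\<omega> 0 - \<omega> y) / y^2\<bar> \<le> gfun 1 1 y"
proof -
  note p = DD_props[OF assms(1)]
  have l: "1 - y^2 \<le> \<omega> y" "0 \<le> \<omega> y" using p(3)[of y] by auto
  have u: "\<omega> y \<le> 1" by (rule p(4))
  have y2: "y^2 > 0" using assms(2) by simp
  show ?thesis
  proof (cases "y \<le> 1")
    case True
    have "\<bar>(\<omega> 0 - \<omega> y) / y^2\<bar> = (1 - \<omega> y) / y^2" using p(2) u y2 by simp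
    also have "\<dots> \<le> 1" using l y2 by (simp add: divide_le_eq)
    finally show ?thesis using True assms(2) by (simp add: gfun_alt)
  next
    case False
    have "\<bar>(\<omega> 0 - \<omega> y) / y^2\<bar> = (1 - \<omega> y) / y^2" using p(2) u y2 by simp
    also have "\<dots> \<le> 1 / y^2" using l y2 by (simp add: divide_right_mono)
    also have "\<dots> \<le> 1 / (y * sqrt y)"
    proof -
      have "y * 1 \<le> y * y" using False by (intro mult_left_mono) auto
      hence "sqrt y \<le> y" using False by (simp add: real_sqrt_le_iff' power2_eq_square)
      hence "y * sqrt y \<le> y^2" using assms(2) by (simp add: power2_eq_square)
      moreover have "0 < y * sqrt y" using assms(2) by simp
      ultimately show ?thesis by (simp add: frac_le)
    qed
    finally show ?thesis using False assms(2) by (simp add: gfun_alt)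
  qed
qed

lemma wnorm_bound:
  assumes "\<omega>1 \<in> DD a" "\<omega>2 \<in> DD a"
  shows "0 \<le> wnorm (\<lambda>x. \<omega>1 x - \<omega>2 x)"
    "\<bar>\<omega>1 y - \<omega>2 y\<bar> \<le> wnorm (\<lambda>x. \<omega>1 x - \<omega>2 x) * sqrt (1 + \<bar>y\<bar>)"
proof -
  have rho: "rho x = 1 / sqrt (1 + \<bar>x\<bar>)" for x
    unfolding rho_def by (simp add: powr_minus_divide powr_half_sqrt)
  have d1: "\<bar>\<omega>1 x - \<omega>2 x\<bar> \<le> 1" for x
    using DD_props(3,4)[OF assms(1), of x] DD_props(3,4)[OF assms(2), of x] by auto
  have r1: "0 < rho x" "rho x \<le> 1" for x unfolding rho by auto
  have bdd: "bdd_above (range (\<lambda>x. \<bar>rho x * (\<omega>1 x - \<omega>2 x)\<bar>))"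
  proof (rule bdd_aboveI2)
    fix x show "\<bar>rho x * (\<omega>1 x - \<omega>2 x)\<bar> \<le> 1"
      using d1[of x] r1[of x] by (simp add: abs_mult mult_le_one)
  qed
  have up: "\<bar>rho x * (\<omega>1 x - \<omega>2 x)\<bar> \<le> wnorm (\<lambda>x. \<omega>1 x - \<omega>2 x)" for x
    unfolding wnorm_def by (rule cSUP_upper[OF _ bdd]) simp
  show "0 \<le> wnorm (\<lambda>x. \<omega>1 x - \<omega>2 x)" using up[of 0] by linarith
  have "\<bar>\<omega>1 y - \<omega>2 y\<bar> = \<bar>rho y * (\<omega>1 y - \<omega>2 y)\<bar> * sqrt (1 + \<bar>y\<bar>)"
    unfolding rho by (simp add: abs_mult)
  also have "\<dots> \<le> wnorm (\<lambda>x. \<omega>1 x - \<omega>2 x) * sqrt (1 + \<bar>y\<bar>)"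
    by (rule mult_right_mono[OF up]) simp
  finally show "\<bar>\<omega>1 y - \<omega>2 y\<bar> \<le> wnorm (\<lambda>x. \<omega>1 x - \<omega>2 x) * sqrt (1 + \<bar>y\<bar>)" .
qed


lemma rr_integral:
  assumes "\<omega> \<in> DD a"
  shows "(\<lambda>y. (\<omega> 0 - \<omega> y) / y^2) integrable_on {0<..}"
    "rr \<omega> = (1/pi) * integral {0<..} (\<lambda>y. (\<omega> 0 - \<omega> y) / y^2)"
proof -
  have si: "set_integrable lborel {0<..} (\<lambda>y. (\<omega> 0 - \<omega> y) / y^2)"
    by (rule set_int_dom[OF DD_meas[OF assms] gfun_int[of 1 1]]) (simp, rule DD_dom[OF assms], assumption)
  show "(\<lambda>y. (\<omega> 0 - \<omega> y) / y^2) integrable_on {0<..}"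
    by (rule set_borel_integral_eq_integral(1)[OF si])
  show "rr \<omega> = (1/pi) * integral {0<..} (\<lambda>y. (\<omega> 0 - \<omega> y) / y^2)"
    unfolding rr_def using set_borel_integral_eq_integral(2)[OF si] by simp
qed

lemma diff_dom:
  assumes "\<omega>1 \<in> DD a" "\<omega>2 \<in> DD a"
  shows "\<exists>g I. (g has_integral I) {0<..} \<and> I \<le> 4 * sqrt (wnorm (\<lambda>x. \<omega>1 x - \<omega>2 x))
     \<and> (\<forall>y>0. \<bar>\<omega>1 y - \<omega>2 y\<bar> / y^2 \<le> g y)"
proof -
  define \<delta> where "\<delta> = wnorm (\<lambda>x. \<omega>1 x - \<omega>2 x)"
  have d0: "0 \<le> \<delta>" unfolding \<delta>_def by (rule wnorm_bound(1)[OF assms])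
  have db: "\<bar>\<omega>1 y - \<omega>2 y\<bar> \<le> \<delta> * sqrt (1 + \<bar>y\<bar>)" for y
    unfolding \<delta>_def by (rule wnorm_bound(2)[OF assms])
  have dsq: "\<bar>\<omega>1 y - \<omega>2 y\<bar> \<le> y^2" "\<bar>\<omega>1 y - \<omega>2 y\<bar> \<le> 1" for y
    using DD_props(3,4)[OF assms(1), of y] DD_props(3,4)[OF assms(2), of y] by auto
  consider "\<delta> = 0" | "1 \<le> \<delta>" | "0 < \<delta>" "\<delta> < 1" using d0 by linarith
  then show ?thesis
  proof cases
    case 1
    have "\<bar>\<omega>1 y - \<omega>2 y\<bar> / y^2 \<le> 0" for y using db[of y] 1 by simp
    then show ?thesis unfolding \<delta>_def[symmetric]
      by (intro exI[of _ "\<lambda>_. 0"] exI[of _ 0]) (auto simp: 1)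
  next
    case 2
    have "\<bar>\<omega>1 y - \<omega>2 y\<bar> / y^2 \<le> gfun 1 1 y" if y: "y > 0" for y
    proof (cases "y \<le> 1")
      case True
      then show ?thesis using dsq(1)[of y] y by (simp add: gfun_alt divide_le_eq)
    next
      case False
      have y2: "y^2 > 0" using y by simp
      have "\<bar>\<omega>1 y - \<omega>2 y\<bar> / y^2 \<le> 1 / y^2" using dsq(2)[of y] y2 by (simp add: divide_right_mono)
      also have "\<dots> \<le> 1 / (y * sqrt y)"
      proof -
        have "y * 1 \<le> y * y" using False by (intro mult_left_mono) auto
        hence "sqrt y \<le> y" using False by (simp add: real_sqrt_le_iff' power2_eq_square)
        hence "y * sqrt y \<le> y^2" using y by (simp add: power2_eq_square)
        moreover have "0 < y * sqrt y" using y by simp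
        ultimately show ?thesis by (simp add: frac_le)
      qed
      finally show ?thesis using False y by (simp add: gfun_alt)
    qed
    moreover have "(3::real) \<le> 4 * sqrt \<delta>"
    proof -
      have "1 \<le> sqrt \<delta>" using 2 by simp
      thus ?thesis by linarith
    qed
    moreover have "(gfun 1 1 has_integral 3) {0<..}" using gfun_int[of 1 1] by simp
    ultimately show ?thesis unfolding \<delta>_def[symmetric] by blast
  next
    case 3
    define s where "s = sqrt \<delta>"
    have s0: "0 < s" "s \<le> 1" "s * s = \<delta>" using 3 d0 unfolding s_def by (auto simp: real_sqrt_le_1_iff)
    define K where "K = sqrt 2 * \<delta> / sqrt s"
    have bd: "\<bar>\<omega>1 y - \<omega>2 y\<bar> / y^2 \<le> gfun s K y" if y: "y > 0" for y
    proof (cases "y \<le> s")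
      case True
      then show ?thesis using dsq(1)[of y] y by (simp add: gfun_alt divide_le_eq)
    next
      case False
      have y2: "y^2 > 0" using y by simp
      have "\<bar>\<omega>1 y - \<omega>2 y\<bar> / y^2 \<le> \<delta> * sqrt (1 + y) / y^2"
        using db[of y] y2 y by (simp add: divide_right_mono)
      also have "\<dots> \<le> K / (y * sqrt y)"
      proof -
        have "y * s \<le> y * 1" using s0 y by (intro mult_left_mono) auto
        moreover have "(1 + y) * s = s + y * s" by (simp add: algebra_simps)
        ultimately have "(1 + y) * s \<le> 2 * y" using False by linarith
        hence q0: "sqrt ((1 + y) * s * y) \<le> sqrt (2 * (y * y))" using y
          by (intro real_sqrt_le_mono) (simp add: mult_right_mono)
        have q1: "sqrt ((1 + y) * s * y) = sqrt (1 + y) * sqrt s * sqrt y" by (simp add: real_sqrt_mult)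
        have q2: "sqrt (2 * (y * y)) = sqrt 2 * y" using y by (simp add: real_sqrt_mult)
        have "sqrt (1 + y) * sqrt s * sqrt y \<le> sqrt 2 * y" using q0 q1 q2 by linarith
        hence h: "\<delta> * (sqrt (1 + y) * sqrt s * sqrt y) \<le> \<delta> * (sqrt 2 * y)"
          using d0 by (simp add: mult_left_mono)
        have r0: "y * (\<delta> * (sqrt (1 + y) * sqrt s * sqrt y)) \<le> y * (\<delta> * (sqrt 2 * y))"
          by (rule mult_left_mono[OF h]) (use y in simp)
        have r1: "\<delta> * sqrt (1 + y) * (sqrt s * (y * sqrt y)) = y * (\<delta> * (sqrt (1 + y) * sqrt s * sqrt y))"
          by (simp add: algebra_simps)
        have r2: "sqrt 2 * \<delta> * y^2 = y * (\<delta> * (sqrt 2 * y))"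
          by (simp add: algebra_simps power2_eq_square)
        have "\<delta> * sqrt (1 + y) * (sqrt s * (y * sqrt y)) \<le> sqrt 2 * \<delta> * y^2"
          using r0 r1 r2 by linarith
        moreover have "0 < sqrt s * (y * sqrt y)" using y s0 by simp
        ultimately show ?thesis unfolding K_def using y2
          by (simp add: divide_simps)
      qed
      finally show ?thesis using False y by (simp add: gfun_alt)
    qed
    have I: "s + K * (2 * s powr (-1/2)) = s + 2 * sqrt 2 * s"
    proof -
      have p: "s powr (-1/2) = 1 / sqrt s" using s0 by (simp add: powr_minus_divide powr_half_sqrt)
      have ss: "sqrt s * sqrt s = s" using s0 by simp
      have "K * (2 * s powr (-1/2)) = 2 * sqrt 2 * \<delta> / (sqrt s * sqrt s)"
        unfolding p K_def by simp
      also have "\<dots> = 2 * sqrt 2 * s" unfolding ss using s0 by (simp add: s0(3)[symmetric])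
      finally show ?thesis by simp
    qed
    have "sqrt 2 \<le> sqrt (9/4::real)" by (rule real_sqrt_le_mono) simp
    moreover have "sqrt (9/4) = (3/2::real)" by (rule real_sqrt_unique) (simp_all add: power2_eq_square)
    ultimately have "sqrt 2 \<le> (3/2::real)" by simp
    hence "(2 * sqrt 2) * s \<le> 3 * s" using s0 by (intro mult_right_mono) auto
    hence "s + 2 * sqrt 2 * s \<le> 4 * sqrt \<delta>" unfolding s_def[symmetric] by linarith
    with I bd gfun_int[OF s0(1), of K] show ?thesis unfolding \<delta>_def[symmetric]
      by (intro exI[of _ "gfun s K"] exI[of _ "s + K * (2 * s powr (-1/2))"]) auto
  qed
qed

theorem mainTheorem8:
  shows "\<exists>C>0. \<forall>a<1. \<forall>\<omega>1\<in>DD a. \<forall>\<omega>2\<in>DD a.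
           \<bar>rr \<omega>1 - rr \<omega>2\<bar> \<le> C * sqrt (wnorm (\<lambda>x. \<omega>1 x - \<omega>2 x))"
proof (intro exI[of _ 4] conjI allI impI ballI)
  fix a :: real and \<omega>1 \<omega>2
  assume w1: "\<omega>1 \<in> DD a" and w2: "\<omega>2 \<in> DD a"
  obtain g I where gI: "(g has_integral I) {0<..}" "I \<le> 4 * sqrt (wnorm (\<lambda>x. \<omega>1 x - \<omega>2 x))"
    "\<forall>y>0. \<bar>\<omega>1 y - \<omega>2 y\<bar> / y^2 \<le> g y"
    using diff_dom[OF w1 w2] by blast
  let ?f1 = "\<lambda>y. (\<omega>1 0 - \<omega>1 y) / y^2" and ?f2 = "\<lambda>y. (\<omega>2 0 - \<omega>2 y) / y^2"
  have "norm (integral {0<..} (\<lambda>y. ?f1 y - ?f2 y)) \<le> integral {0<..} g"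
  proof (rule integral_norm_bound_integral)
    show "(\<lambda>y. ?f1 y - ?f2 y) integrable_on {0<..}"
      by (intro integrable_diff rr_integral(1)[OF w1] rr_integral(1)[OF w2])
    show "g integrable_on {0<..}" using gI(1) by blast
    fix y :: real assume "y \<in> {0<..}"
    hence "\<bar>\<omega>1 y - \<omega>2 y\<bar> / y^2 \<le> g y" using gI(3) by simp
    moreover have "norm (?f1 y - ?f2 y) = \<bar>\<omega>1 y - \<omega>2 y\<bar> / y^2"
      using DD_props(2)[OF w1] DD_props(2)[OF w2]
      by (simp add: diff_divide_distrib[symmetric] abs_minus_commute)
    ultimately show "norm (?f1 y - ?f2 y) \<le> g y" by simp
  qed
  hence "\<bar>integral {0<..} ?f1 - integral {0<..} ?f2\<bar> \<le> I"
    using integral_diff[OF rr_integral(1)[OF w1] rr_integral(1)[OF w2]] integral_unique[OF gI(1)]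
    by simp
  hence "\<bar>rr \<omega>1 - rr \<omega>2\<bar> \<le> (1/pi) * I"
    unfolding rr_integral(2)[OF w1] rr_integral(2)[OF w2]
    using pi_gt_zero by (simp add: diff_divide_distrib[symmetric] abs_divide divide_right_mono)
  also have "\<dots> \<le> (1/pi) * (4 * sqrt (wnorm (\<lambda>x. \<omega>1 x - \<omega>2 x)))"
    using gI(2) by (simp add: divide_right_mono)
  also have "\<dots> \<le> 4 * sqrt (wnorm (\<lambda>x. \<omega>1 x - \<omega>2 x))"
  proof -
    have "sqrt (wnorm (\<lambda>x. \<omega>1 x - \<omega>2 x)) * 1 \<le> sqrt (wnorm (\<lambda>x. \<omega>1 x - \<omega>2 x)) * pi"
      using wnorm_bound(1)[OF w1 w2] pi_gt3 by (intro mult_left_mono) auto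
    thus ?thesis using pi_gt3 by (simp add: divide_le_eq)
  qed
  finally show "\<bar>rr \<omega>1 - rr \<omega>2\<bar> \<le> 4 * sqrt (wnorm (\<lambda>x. \<omega>1 x - \<omega>2 x))" .
qed simp

end
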